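(* Let $\bar{\mathcal{X}}=(\mathcal{G},\mathbf{U}_1,\mathbf{U}_2,\mathbf{U}_3)\in\mathcal{M}_r$ and $\eta=(\eta_{\mathcal{G}},\eta_1,\eta_2,\eta_3)\in T_{\bar{\mathcal{X}}}\mathcal{M}_r$. The linear system in skew-symmetric unknowns $\mathbf{\Omega}_i\in\mathbb{R}^{r_i\times r_i}$ ($\mathbf{\Omega}_i^\top=-\mathbf{\Omega}_i$), $i=1,2,3$, $$\mathrm{skw}(\mathbf{V}_i^\top\mathbf{V}_i\mathbf{\Omega}_i\mathbf{G}_i)+\mathrm{skw}(\mathbf{G}_i\mathbf{\Omega}_i)+\mathrm{skw}(\mathbf{W}_i^\top\mathbf{W}_i\mathbf{\Omega}_i\mathbf{G}_{\alpha_i})-\mathcal{G}_{(i)}\big(\mathbf{I}_{r_{j_i}}\otimes\mathbf{\Omega}_{k_i}+\mathbf{\Omega}_{j_i}\otimes\mathbf{I}_{r_{k_i}}\big)\mathcal{G}_{(i)}^\top=\mathrm{skw}\big(\mathbf{V}_i^\top\eta_i\mathbf{G}_i+\mathbf{W}_i^\top\eta_i\mathbf{G}_{\alpha_i}+\mathcal{G}_{(i)}(\eta_{\mathcal{G}})_{(i)}^\top\big),\quad i=1,2,3,$$ has a unique solution $(\mathbf{\Omega}_1,\mathbf{\Omega}_2,\mathbf{\Omega}_3)$, and the orthogonal projection (with respect to $\langle\cdot,\cdot\rangle_{\bar{\mathcal{X}}}$) of $\eta$ onto the horizontal space $\mathcal{H}_{\bar{\mathcal{X}}}$ is $$\Pi_{\bar{\mathcal{X}}}(\eta)=\Big(\eta_{\mathcal{G}}+\sum_{i=1}^3\mathcal{G}\times_i\mathbf{\Omega}_i,\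 \eta_1-\mathbf{U}_1\mathbf{\Omega}_1,\ \eta_2-\mathbf{U}_2\mathbf{\Omega}_2,\ \eta_3-\mathbf{U}_3\mathbf{\Omega}_3\Big).$$
   Context: Fix $1\le r_i\le n_i$, $k_i\ge r_i$, $N=n_1n_2n_3$, $\alpha_i>0$, $\mathbf{P}_i\in\mathbb{R}^{n_i\times k_i}$ with orthonormal columns. $\mathcal{X}_{(i)}$ is the mode-$i$ matricization and $\times_i$ the mode-$i$ product, with the convention $(\mathcal{G}\times_1\mathbf{A}_1\times_2\mathbf{A}_2\times_3\mathbf{A}_3)_{(i)}=\mathbf{A}_i\mathcal{G}_{(i)}(\mathbf{A}_{j_i}\otimes\mathbf{A}_{k_i})^\top$, where $j_i=\max(\{1,2,3\}\setminus\{i\})$, $k_i=\min(\{1,2,3\}\setminus\{i\})$, and $\otimes$ is the Kronecker product. Total space $\mathcal{M}_r=\{(\mathcal{G},\mathbf{U}_1,\mathbf{U}_2,\mathbf{U}_3):\mathcal{G}\in\mathbb{R}^{r_1\times r_2\times r_3},\ \mathrm{rank}\,\mathcal{G}_{(i)}=r_i,\ \mathbf{U}_i^\top\mathbf{U}_i=\mathbf{I}_{r_i}\}$, tangent space $T_{\bar{\mathcal{X}}}\mathcal{M}_r=\{(\eta_{\mathcal{G}},\eta_1,\eta_2,\eta_3):\mathbf{U}_i^\top\eta_i+\eta_i^\top\mathbf{U}_i=0\}$. Metric: $\langle\eta,\xi\rangle_{\bar{\mathcal{X}}}=\sum_i\langle\eta_i,\xi_i\mathcal{G}_{(i)}\mathcal{G}_{(i)}^\top\rangle+\langle\eta_{\mathcal{G}},\xi_{\mathcal{G}}\rangle+\sum_iN\alpha_i\langle\eta_i,(\mathbf{I}-\mathbf{P}_i\mathbf{P}_i^\top)\xi_i\rangle$.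 Vertical space $\mathcal{V}_{\bar{\mathcal{X}}}=\{(-\sum_{i=1}^3\mathcal{G}\times_i\mathbf{\Omega}_i,\mathbf{U}_1\mathbf{\Omega}_1,\mathbf{U}_2\mathbf{\Omega}_2,\mathbf{U}_3\mathbf{\Omega}_3):\mathbf{\Omega}_i^\top=-\mathbf{\Omega}_i\}$; horizontal space $\mathcal{H}_{\bar{\mathcal{X}}}$ = orthogonal complement of $\mathcal{V}_{\bar{\mathcal{X}}}$ in $T_{\bar{\mathcal{X}}}\mathcal{M}_r$ w.r.t. the metric. Notation: $\mathbf{V}_i=\mathbf{P}_i\mathbf{P}_i^\top\mathbf{U}_i$, $\mathbf{W}_i=\mathbf{U}_i-\mathbf{V}_i$, $\mathbf{G}_i=\mathcal{G}_{(i)}\mathcal{G}_{(i)}^\top$, $\mathbf{G}_{\alpha_i}=N\alpha_i\mathbf{I}+\mathcal{G}_{(i)}\mathcal{G}_{(i)}^\top$, $\mathrm{skw}(\mathbf{A})=(\mathbf{A}-\mathbf{A}^\top)/2$. *)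

theory Defs
  imports "HOL-Analysis.Analysis"
begin

text \<open>Kronecker products are indexed
by pairs, (A (x) B)[(i,k),(j,l)] = A[i,j] B[k,l]; the mode-i matricization has
columns indexed by pairs (a_{j_i}, a_{k_i}) with j_i = max, k_i = min of the other
two modes, consistent with the convention
(G x1 A1 x2 A2 x3 A3)_(i) = A_i G_(i) (A_{j_i} (x) A_{k_i})^T.\<close>

type_synonym ('a,'b,'c) tensor3 = "'a \<Rightarrow> 'b \<Rightarrow> 'c \<Rightarrow> real"

definition kron :: "(real^'b::finite^'a::finite) \<Rightarrow> (real^'d::finite^'c::finite) \<Rightarrow> real^('b \<times> 'd)^('a \<times> 'c)" where
  "kron A B = (\<chi> ik. \<chi> jl. A $ fst ik $ fst jl * B $ snd ik $ snd jl)"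

definition skw :: "(real^'n::finite^'n) \<Rightarrow> (real^'n^'n)" where
  "skw A = (1/2) *\<^sub>R (A - transpose A)"

definition frob :: "(real^'c::finite^'r::finite) \<Rightarrow> (real^'c^'r) \<Rightarrow> real" where
  "frob A B = (\<Sum>i\<in>UNIV. \<Sum>j\<in>UNIV. A $ i $ j * B $ i $ j)"

definition tinner :: "('a::finite,'b::finite,'c::finite) tensor3 \<Rightarrow> ('a,'b,'c) tensor3 \<Rightarrow> real" where
  "tinner S T = (\<Sum>a\<in>UNIV. \<Sum>b\<in>UNIV. \<Sum>c\<in>UNIV. S a b c * T a b c)"

definition unf1 :: "('a::finite,'b::finite,'c::finite) tensor3 \<Rightarrow> real^('c \<times> 'b)^'a" where
  "unf1 G = (\<chi> a. \<chi> cb. G a (snd cb) (fst cb))"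
definition unf2 :: "('a::finite,'b::finite,'c::finite) tensor3 \<Rightarrow> real^('c \<times> 'a)^'b" where
  "unf2 G = (\<chi> b. \<chi> ca. G (snd ca) b (fst ca))"
definition unf3 :: "('a::finite,'b::finite,'c::finite) tensor3 \<Rightarrow> real^('b \<times> 'a)^'c" where
  "unf3 G = (\<chi> c. \<chi> ba. G (snd ba) (fst ba) c)"

definition mprod1 :: "('a::finite,'b,'c) tensor3 \<Rightarrow> (real^'a^'m::finite) \<Rightarrow> ('m,'b,'c) tensor3" where
  "mprod1 G A = (\<lambda>x b c. \<Sum>a\<in>UNIV. A $ x $ a * G a b c)"
definition mprod2 :: "('a,'b::finite,'c) tensor3 \<Rightarrow> (real^'b^'m::finite) \<Rightarrow> ('a,'m,'c) tensor3" where
  "mprod2 G A = (\<lambda>a x c. \<Sum>b\<in>UNIV. A $ x $ b * G a b c)"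
definition mprod3 :: "('a,'b,'c::finite) tensor3 \<Rightarrow> (real^'c^'m::finite) \<Rightarrow> ('a,'b,'m) tensor3" where
  "mprod3 G A = (\<lambda>a b x. \<Sum>c\<in>UNIV. A $ x $ c * G a b c)"

definition skew_mat :: "(real^'n::finite^'n) \<Rightarrow> bool" where
  "skew_mat A \<longleftrightarrow> transpose A = - A"

definition in_Mr ::
  "('r1::finite,'r2::finite,'r3::finite) tensor3 \<times> (real^'r1^'n1::finite) \<times> (real^'r2^'n2::finite) \<times> (real^'r3^'n3::finite) \<Rightarrow> bool" where
  "in_Mr X = (case X of (G,U1,U2,U3) \<Rightarrow>
     rank (unf1 G) = CARD('r1) \<and> rank (unf2 G) = CARD('r2) \<and> rank (unf3 G) = CARD('r3) \<and>
     transpose U1 ** U1 = mat 1 \<and> transpose U2 ** U2 = mat 1 \<and> transpose U3 ** U3 = mat 1)"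

definition tangent_space ::
  "('r1::finite,'r2::finite,'r3::finite) tensor3 \<times> (real^'r1^'n1::finite) \<times> (real^'r2^'n2::finite) \<times> (real^'r3^'n3::finite) \<Rightarrow>
   (('r1,'r2,'r3) tensor3 \<times> (real^'r1^'n1) \<times> (real^'r2^'n2) \<times> (real^'r3^'n3)) set" where
  "tangent_space X = (case X of (G,U1,U2,U3) \<Rightarrow>
     {(eG,e1,e2,e3). transpose U1 ** e1 + transpose e1 ** U1 = 0 \<and>
                     transpose U2 ** e2 + transpose e2 ** U2 = 0 \<and>
                     transpose U3 ** e3 + transpose e3 ** U3 = 0})"

definition metric ::
  "(real^'k1::finite^'n1) \<times> (real^'k2::finite^'n2) \<times> (real^'k3::finite^'n3) \<Rightarrow> real \<times> real \<times> real \<Rightarrow>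
   ('r1::finite,'r2::finite,'r3::finite) tensor3 \<times> (real^'r1^'n1::finite) \<times> (real^'r2^'n2::finite) \<times> (real^'r3^'n3::finite) \<Rightarrow>
   ('r1,'r2,'r3) tensor3 \<times> (real^'r1^'n1) \<times> (real^'r2^'n2) \<times> (real^'r3^'n3) \<Rightarrow>
   ('r1,'r2,'r3) tensor3 \<times> (real^'r1^'n1) \<times> (real^'r2^'n2) \<times> (real^'r3^'n3) \<Rightarrow> real" where
  "metric P al X eta xi = (case P of (P1,P2,P3) \<Rightarrow> case al of (a1,a2,a3) \<Rightarrow>
     case X of (G,U1,U2,U3) \<Rightarrow> case eta of (eG,e1,e2,e3) \<Rightarrow> case xi of (xG,x1,x2,x3) \<Rightarrow>
     let N = real (CARD('n1) * CARD('n2) * CARD('n3)) in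
       frob e1 (x1 ** (unf1 G ** transpose (unf1 G)))
     + frob e2 (x2 ** (unf2 G ** transpose (unf2 G)))
     + frob e3 (x3 ** (unf3 G ** transpose (unf3 G)))
     + tinner eG xG
     + N * a1 * frob e1 ((mat 1 - P1 ** transpose P1) ** x1)
     + N * a2 * frob e2 ((mat 1 - P2 ** transpose P2) ** x2)
     + N * a3 * frob e3 ((mat 1 - P3 ** transpose P3) ** x3))"

definition vertical_space ::
  "('r1::finite,'r2::finite,'r3::finite) tensor3 \<times> (real^'r1^'n1::finite) \<times> (real^'r2^'n2::finite) \<times> (real^'r3^'n3::finite) \<Rightarrow>
   (('r1,'r2,'r3) tensor3 \<times> (real^'r1^'n1) \<times> (real^'r2^'n2) \<times> (real^'r3^'n3)) set" where
  "vertical_space X = (case X of (G,U1,U2,U3) \<Rightarrow>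
     {((\<lambda>a b c. - (mprod1 G O1 a b c + mprod2 G O2 a b c + mprod3 G O3 a b c)),
        U1 ** O1, U2 ** O2, U3 ** O3) | O1 O2 O3.
        skew_mat O1 \<and> skew_mat O2 \<and> skew_mat O3})"

definition horizontal_space where
  "horizontal_space P al X =
     {xi \<in> tangent_space X. \<forall>v \<in> vertical_space X. metric P al X v xi = 0}"

definition tdiff ::
  "('r1,'r2,'r3) tensor3 \<times> (real^'r1::finite^'n1::finite) \<times> (real^'r2::finite^'n2::finite) \<times> (real^'r3::finite^'n3::finite) \<Rightarrow>
   ('r1,'r2,'r3) tensor3 \<times> (real^'r1^'n1) \<times> (real^'r2^'n2) \<times> (real^'r3^'n3) \<Rightarrow>
   ('r1,'r2,'r3) tensor3 \<times> (real^'r1^'n1) \<times> (real^'r2^'n2) \<times> (real^'r3^'n3)" where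
  "tdiff eta xi = (case eta of (eG,e1,e2,e3) \<Rightarrow> case xi of (xG,x1,x2,x3) \<Rightarrow>
     ((\<lambda>a b c. eG a b c - xG a b c), e1 - x1, e2 - x2, e3 - x3))"

definition horizontal_proj where
  "horizontal_proj P al X eta =
     (THE p. p \<in> horizontal_space P al X \<and>
             (\<forall>xi \<in> horizontal_space P al X. metric P al X (tdiff eta p) xi = 0))"

text \<open>The i-th equation of the linear system, written generically:
Gi is the mode-i matricization of G, Ui, Pm, ei the i-th factor data,
eGi the mode-i matricization of eta_G, Oi the unknown,
Oj, Ok the unknowns of modes j_i and k_i; N and a the weights.\<close>
definition sys_eq ::
  "real^('j::finite \<times> 'k::finite)^'r::finite \<Rightarrow> (real^'r^'n::finite) \<Rightarrow> (real^'kk::finite^'n) \<Rightarrow> (real^'r^'n) \<Rightarrow> real^('j \<times> 'k)^'r \<Rightarrow>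
   real \<Rightarrow> real \<Rightarrow> (real^'r^'r) \<Rightarrow> (real^'j^'j) \<Rightarrow> (real^'k^'k) \<Rightarrow> bool" where
  "sys_eq Gi Ui Pm ei eGi N a Oi Oj Ok =
     (let V = Pm ** transpose Pm ** Ui; W = Ui - V;
          GG = Gi ** transpose Gi; Ga = (N * a) *\<^sub>R mat 1 + Gi ** transpose Gi in
      skw (transpose V ** V ** Oi ** GG) + skw (GG ** Oi) + skw (transpose W ** W ** Oi ** Ga)
        - Gi ** (kron (mat 1) Ok + kron Oj (mat 1)) ** transpose Gi
      = skw (transpose V ** ei ** GG + transpose W ** ei ** Ga + Gi ** transpose eGi))"

definition lin_system ::
  "(real^'k1::finite^'n1) \<times> (real^'k2::finite^'n2) \<times> (real^'k3::finite^'n3) \<Rightarrow> real \<times> real \<times> real \<Rightarrow>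
   ('r1::finite,'r2::finite,'r3::finite) tensor3 \<times> (real^'r1^'n1::finite) \<times> (real^'r2^'n2::finite) \<times> (real^'r3^'n3::finite) \<Rightarrow>
   ('r1,'r2,'r3) tensor3 \<times> (real^'r1^'n1) \<times> (real^'r2^'n2) \<times> (real^'r3^'n3) \<Rightarrow>
   (real^'r1^'r1) \<Rightarrow> (real^'r2^'r2) \<Rightarrow> (real^'r3^'r3) \<Rightarrow> bool" where
  "lin_system P al X eta O1 O2 O3 = (case P of (P1,P2,P3) \<Rightarrow> case al of (a1,a2,a3) \<Rightarrow>
     case X of (G,U1,U2,U3) \<Rightarrow> case eta of (eG,e1,e2,e3) \<Rightarrow>
     let N = real (CARD('n1) * CARD('n2) * CARD('n3)) in
     skew_mat O1 \<and> skew_mat O2 \<and> skew_mat O3 \<and>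
     sys_eq (unf1 G) U1 P1 e1 (unf1 eG) N a1 O1 O3 O2 \<and>
     sys_eq (unf2 G) U2 P2 e2 (unf2 eG) N a2 O2 O3 O1 \<and>
     sys_eq (unf3 G) U3 P3 e3 (unf3 eG) N a3 O3 O2 O1)"

end

theory Submission
  imports Defs
begin


section \<open>Basic matrix algebra\<close>

lemma mm_add_r: "((A::real^'n^'m) + B) ** (C::real^'p^'n) = A ** C + B ** C"
  by (simp add: matrix_matrix_mult_def vec_eq_iff sum.distrib distrib_right)
lemma mm_diff_l: "(A::real^'n^'m) ** ((B::real^'p^'n) - C) = A ** B - A ** C"
  by (simp add: matrix_matrix_mult_def vec_eq_iff sum_subtractf right_diff_distrib)
lemma mm_diff_r: "((A::real^'n^'m) - B) ** (C::real^'p^'n) = A ** C - B ** C"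
  by (simp add: matrix_matrix_mult_def vec_eq_iff sum_subtractf left_diff_distrib)
lemma mm_neg_l: "(- (A::real^'n^'m)) ** (C::real^'p^'n) = - (A ** C)"
  by (simp add: matrix_matrix_mult_def vec_eq_iff sum_negf)
lemma mm_neg_r: "(A::real^'n^'m) ** (- (C::real^'p^'n)) = - (A ** C)"
  by (simp add: matrix_matrix_mult_def vec_eq_iff sum_negf)
lemma mm_scale_l: "(k *\<^sub>R (A::real^'n^'m)) ** (C::real^'p^'n) = k *\<^sub>R (A ** C)"
  by (simp add: matrix_matrix_mult_def vec_eq_iff sum_distrib_left mult_ac)
lemma mm_scale_r: "(A::real^'n^'m) ** (k *\<^sub>R (C::real^'p^'n)) = k *\<^sub>R (A ** C)"
  by (simp add: matrix_matrix_mult_def vec_eq_iff sum_distrib_left mult_ac)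
lemma tr_add: "transpose ((A::real^'n^'m) + B) = transpose A + transpose B"
  by (simp add: transpose_def vec_eq_iff)
lemma tr_diff: "transpose ((A::real^'n^'m) - B) = transpose A - transpose B"
  by (simp add: transpose_def vec_eq_iff)
lemma tr_neg: "transpose (- (A::real^'n^'m)) = - transpose A"
  by (simp add: transpose_def vec_eq_iff)
lemma tr_zero: "transpose (0::real^'n^'m) = 0"
  by (simp add: transpose_def vec_eq_iff)

lemmas mm_simps = matrix_add_ldistrib mm_add_r mm_diff_l mm_diff_r mm_neg_l mm_neg_r
  mm_scale_l mm_scale_r tr_add tr_diff tr_neg transpose_scalar matrix_transpose_mul

section \<open>Frobenius inner product\<close>

lemma sum_swap3: "(\<Sum>i\<in>A. \<Sum>j\<in>B. \<Sum>k\<in>C. f i j k) = (\<Sum>k\<in>C. \<Sum>j\<in>B. \<Sum>i\<in>A. f i j k)"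
proof -
  have "(\<Sum>i\<in>A. \<Sum>j\<in>B. \<Sum>k\<in>C. f i j k) = (\<Sum>i\<in>A. \<Sum>k\<in>C. \<Sum>j\<in>B. f i j k)"
    by (rule sum.cong[OF refl], rule sum.swap)
  also have "\<dots> = (\<Sum>k\<in>C. \<Sum>i\<in>A. \<Sum>j\<in>B. f i j k)" by (rule sum.swap)
  also have "\<dots> = (\<Sum>k\<in>C. \<Sum>j\<in>B. \<Sum>i\<in>A. f i j k)"
    by (rule sum.cong[OF refl], rule sum.swap)
  finally show ?thesis .
qed

lemma frob_sym: "frob A B = frob B A"
  by (simp add: frob_def mult.commute)
lemma frob_add_l: "frob (A + B) C = frob A C + frob B C"
  by (simp add: frob_def distrib_right sum.distrib)
lemma frob_diff_l: "frob (A - B) C = frob A C - frob B C"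
  by (simp add: frob_def left_diff_distrib sum_subtractf)
lemma frob_add_r: "frob A (B + C) = frob A B + frob A C"
  by (simp add: frob_def distrib_left sum.distrib)
lemma frob_diff_r: "frob A (B - C) = frob A B - frob A C"
  by (simp add: frob_def right_diff_distrib sum_subtractf)
lemma frob_neg_r: "frob A (- B) = - frob A B"
  by (simp add: frob_def sum_negf)
lemma frob_neg_l: "frob (- A) B = - frob A B"
  by (simp add: frob_def sum_negf)
lemma frob_scale_r: "frob A (k *\<^sub>R B) = k * frob A B"
  by (simp add: frob_def sum_distrib_left mult_ac)
lemma frob_scale_l: "frob (k *\<^sub>R A) B = k * frob A B"
  by (simp add: frob_def sum_distrib_left mult_ac)
lemma frob_zero_l [simp]: "frob 0 B = 0"
  by (simp add: frob_def)
lemma frob_zero_r [simp]: "frob A 0 = 0"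
  by (simp add: frob_def)

lemma frob_mm_l: "frob ((A::real^'n^'m) ** (B::real^'p^'n)) C = frob B (transpose A ** C)"
proof -
  have "frob (A ** B) C = (\<Sum>i\<in>UNIV. \<Sum>j\<in>UNIV. \<Sum>k\<in>UNIV. A$i$k * B$k$j * C$i$j)"
    by (simp add: frob_def matrix_matrix_mult_def sum_distrib_right)
  also have "\<dots> = (\<Sum>k\<in>UNIV. \<Sum>j\<in>UNIV. \<Sum>i\<in>UNIV. A$i$k * B$k$j * C$i$j)"
    by (rule sum_swap3)
  also have "\<dots> = frob B (transpose A ** C)"
    by (simp add: frob_def matrix_matrix_mult_def transpose_def sum_distrib_left mult_ac)
  finally show ?thesis .
qed

lemma frob_mm_r: "frob A ((B::real^'n^'m) ** (C::real^'p^'n)) = frob (A ** transpose C) B"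
proof -
  have "frob A (B ** C) = (\<Sum>i\<in>UNIV. \<Sum>j\<in>UNIV. \<Sum>k\<in>UNIV. A$i$j * B$i$k * C$k$j)"
    by (simp add: frob_def matrix_matrix_mult_def sum_distrib_left mult_ac)
  also have "\<dots> = (\<Sum>i\<in>UNIV. \<Sum>k\<in>UNIV. \<Sum>j\<in>UNIV. A$i$j * B$i$k * C$k$j)"
    by (rule sum.cong[OF refl], rule sum.swap)
  also have "\<dots> = frob (A ** transpose C) B"
    by (simp add: frob_def matrix_matrix_mult_def transpose_def sum_distrib_left sum_distrib_right mult_ac)
  finally show ?thesis .
qed

lemma frob_tr: "frob (transpose A) (transpose B) = frob A B"
  unfolding frob_def transpose_def by (simp, rule sum.swap)

lemma frob_self_nonneg: "frob A A \<ge> 0"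
  unfolding frob_def by (intro sum_nonneg) auto

lemma frob_self_zero: "frob A A = 0 \<Longrightarrow> A = 0"
proof -
  assume h: "frob A A = 0"
  have "\<forall>i\<in>UNIV. (\<Sum>j\<in>UNIV. A$i$j * A$i$j) = 0"
    using h unfolding frob_def by (subst sum_nonneg_eq_0_iff[symmetric]) (auto intro: sum_nonneg)
  then have "\<forall>i j. A$i$j * A$i$j = 0"
    by (auto simp: sum_nonneg_eq_0_iff)
  then show ?thesis by (simp add: vec_eq_iff)
qed

section \<open>skew parts\<close>

lemma skw_add: "skw (A + B) = skw A + skw B"
  by (simp add: skw_def tr_add algebra_simps)
lemma skw_diff: "skw (A - B) = skw A - skw B"
  by (simp add: skw_def tr_diff algebra_simps)
lemma skw_neg: "skw (- A) = - skw A"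
  by (simp add: skw_def tr_neg algebra_simps)
lemma skw_scale: "skw (k *\<^sub>R A) = k *\<^sub>R skw A"
  by (simp add: skw_def transpose_scalar algebra_simps)
lemma skw_zero [simp]: "skw 0 = 0"
  by (simp add: skw_def tr_zero)
lemma skw_tr: "skw (transpose A) = - skw A"
  by (simp add: skw_def algebra_simps)
lemma tr_skw: "transpose (skw A) = - skw A"
  by (simp add: skw_def transpose_scalar tr_diff algebra_simps)
lemma skew_skw: "skew_mat (skw A)"
  by (simp add: skew_mat_def tr_skw)
lemma skw_skew: "skew_mat A \<Longrightarrow> skw A = A"
  by (simp add: skew_mat_def skw_def scaleR_2[symmetric] )

lemma frob_skew_sym: "transpose S = - S \<Longrightarrow> transpose B = B \<Longrightarrow> frob S B = 0"
proof -
  assume s: "transpose S = - S" and b: "transpose B = B"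
  have "frob S B = frob (transpose S) (transpose B)" by (simp add: frob_tr)
  also have "\<dots> = - frob S B" using s b by (simp add: frob_neg_l)
  finally show ?thesis by simp
qed

lemma frob_skew: "skew_mat S \<Longrightarrow> frob S A = frob S (skw A)"
proof -
  assume s: "skew_mat S"
  have A: "A = skw A + (1/2) *\<^sub>R (A + transpose A)"
    by (simp add: skw_def algebra_simps scaleR_2[symmetric])
  have "frob S ((1/2) *\<^sub>R (A + transpose A)) = 0"
    using s by (intro frob_skew_sym) (auto simp: skew_mat_def transpose_scalar tr_add add.commute)
  then show ?thesis by (subst A) (simp add: frob_add_r)
qed



lemma tr_kron: "transpose (kron A B) = kron (transpose A) (transpose B)"
  by (simp add: kron_def transpose_def vec_eq_iff)
lemma kron_add_r: "kron A (B + C) = kron A B + kron A C"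
  by (simp add: kron_def vec_eq_iff distrib_left)
lemma kron_add_l: "kron (A + B) C = kron A C + kron B C"
  by (simp add: kron_def vec_eq_iff distrib_right)
lemma kron_scale_r: "kron A (k *\<^sub>R B) = k *\<^sub>R kron A B"
  by (simp add: kron_def vec_eq_iff mult_ac)
lemma kron_scale_l: "kron (k *\<^sub>R A) B = k *\<^sub>R kron A B"
  by (simp add: kron_def vec_eq_iff mult_ac)
lemma kron_diff_r: "kron A (B - C) = kron A B - kron A C"
  by (simp add: kron_def vec_eq_iff right_diff_distrib)
lemma kron_diff_l: "kron (A - B) C = kron A C - kron B C"
  by (simp add: kron_def vec_eq_iff left_diff_distrib)
lemma kron_neg_r: "kron A (- B) = - kron A B"
  by (simp add: kron_def vec_eq_iff)
lemma kron_neg_l: "kron (- A) B = - kron A B"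
  by (simp add: kron_def vec_eq_iff)

lemma sum_pair_UNIV: "(\<Sum>p\<in>(UNIV::('a::finite \<times> 'b::finite) set). f p) = (\<Sum>x\<in>UNIV. \<Sum>y\<in>UNIV. f (x,y))"
  by (subst UNIV_Times_UNIV[symmetric]) (simp add: sum.cartesian_product)

lemma sum_delta_outer: "(\<Sum>x\<in>(UNIV::'a::finite set). \<Sum>y\<in>(UNIV::'b::finite set). if a = x then g x y else 0) = (\<Sum>y\<in>UNIV. g a y)"
proof -
  have "\<And>x. (\<Sum>y\<in>(UNIV::'b set). if a = x then g x y else 0) = (if a = x then \<Sum>y\<in>UNIV. g x y else 0)"
    by auto
  then show ?thesis by (simp add: sum.delta)
qed

section \<open>Unfoldings\<close>

lemma unf1_mp1: "unf1 (mprod1 G A) = A ** unf1 G"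
  by (simp add: unf1_def mprod1_def matrix_matrix_mult_def vec_eq_iff)
lemma unf2_mp2: "unf2 (mprod2 G A) = A ** unf2 G"
  by (simp add: unf2_def mprod2_def matrix_matrix_mult_def vec_eq_iff)
lemma unf3_mp3: "unf3 (mprod3 G A) = A ** unf3 G"
  by (simp add: unf3_def mprod3_def matrix_matrix_mult_def vec_eq_iff)

lemma unf1_mp2: "unf1 (mprod2 G A) = unf1 G ** transpose (kron (mat 1) A)"
  by (simp add: unf1_def mprod2_def matrix_matrix_mult_def vec_eq_iff kron_def transpose_def
     mat_def sum_pair_UNIV if_distrib if_distribR sum.delta' sum_delta_outer mult_ac cong: if_cong)
lemma unf1_mp3: "unf1 (mprod3 G A) = unf1 G ** transpose (kron A (mat 1))"
  by (simp add: unf1_def mprod3_def matrix_matrix_mult_def vec_eq_iff kron_def transpose_def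
     mat_def sum_pair_UNIV if_distrib if_distribR sum.delta' sum_delta_outer mult_ac cong: if_cong)
lemma unf2_mp1: "unf2 (mprod1 G A) = unf2 G ** transpose (kron (mat 1) A)"
  by (simp add: unf2_def mprod1_def matrix_matrix_mult_def vec_eq_iff kron_def transpose_def
     mat_def sum_pair_UNIV if_distrib if_distribR sum.delta' sum_delta_outer mult_ac cong: if_cong)
lemma unf2_mp3: "unf2 (mprod3 G A) = unf2 G ** transpose (kron A (mat 1))"
  by (simp add: unf2_def mprod3_def matrix_matrix_mult_def vec_eq_iff kron_def transpose_def
     mat_def sum_pair_UNIV if_distrib if_distribR sum.delta' sum_delta_outer mult_ac cong: if_cong)
lemma unf3_mp1: "unf3 (mprod1 G A) = unf3 G ** transpose (kron (mat 1) A)"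
  by (simp add: unf3_def mprod1_def matrix_matrix_mult_def vec_eq_iff kron_def transpose_def
     mat_def sum_pair_UNIV if_distrib if_distribR sum.delta' sum_delta_outer mult_ac cong: if_cong)
lemma unf3_mp2: "unf3 (mprod2 G A) = unf3 G ** transpose (kron A (mat 1))"
  by (simp add: unf3_def mprod2_def matrix_matrix_mult_def vec_eq_iff kron_def transpose_def
     mat_def sum_pair_UNIV if_distrib if_distribR sum.delta' sum_delta_outer mult_ac cong: if_cong)

lemma unf1_add: "unf1 (\<lambda>a b c. S a b c + T a b c) = unf1 S + unf1 T"
  by (simp add: unf1_def vec_eq_iff)
lemma unf2_add: "unf2 (\<lambda>a b c. S a b c + T a b c) = unf2 S + unf2 T"
  by (simp add: unf2_def vec_eq_iff)
lemma unf3_add: "unf3 (\<lambda>a b c. S a b c + T a b c) = unf3 S + unf3 T"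
  by (simp add: unf3_def vec_eq_iff)
lemma unf1_diff: "unf1 (\<lambda>a b c. S a b c - T a b c) = unf1 S - unf1 T"
  by (simp add: unf1_def vec_eq_iff)
lemma unf2_diff: "unf2 (\<lambda>a b c. S a b c - T a b c) = unf2 S - unf2 T"
  by (simp add: unf2_def vec_eq_iff)
lemma unf3_diff: "unf3 (\<lambda>a b c. S a b c - T a b c) = unf3 S - unf3 T"
  by (simp add: unf3_def vec_eq_iff)
lemma unf1_neg: "unf1 (\<lambda>a b c. - S a b c) = - unf1 S"
  by (simp add: unf1_def vec_eq_iff)
lemma unf2_neg: "unf2 (\<lambda>a b c. - S a b c) = - unf2 S"
  by (simp add: unf2_def vec_eq_iff)
lemma unf3_neg: "unf3 (\<lambda>a b c. - S a b c) = - unf3 S"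
  by (simp add: unf3_def vec_eq_iff)

lemma tinner_unf1: "tinner S T = frob (unf1 S) (unf1 T)"
  unfolding tinner_def frob_def unf1_def
  by (simp add: sum_pair_UNIV, rule sum.cong[OF refl], rule sum.swap)
lemma tinner_unf2: "tinner S T = frob (unf2 S) (unf2 T)"
proof -
  have "tinner S T = (\<Sum>a\<in>UNIV. \<Sum>b\<in>UNIV. \<Sum>c\<in>UNIV. S a b c * T a b c)" by (simp add: tinner_def)
  also have "\<dots> = (\<Sum>b\<in>UNIV. \<Sum>a\<in>UNIV. \<Sum>c\<in>UNIV. S a b c * T a b c)" by (rule sum.swap)
  also have "\<dots> = (\<Sum>b\<in>UNIV. \<Sum>c\<in>UNIV. \<Sum>a\<in>UNIV. S a b c * T a b c)"
    by (rule sum.cong[OF refl], rule sum.swap)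
  also have "\<dots> = frob (unf2 S) (unf2 T)" by (simp add: frob_def unf2_def sum_pair_UNIV)
  finally show ?thesis .
qed
lemma tinner_unf3: "tinner S T = frob (unf3 S) (unf3 T)"
proof -
  have "tinner S T = (\<Sum>a\<in>UNIV. \<Sum>b\<in>UNIV. \<Sum>c\<in>UNIV. S a b c * T a b c)" by (simp add: tinner_def)
  also have "\<dots> = (\<Sum>c\<in>UNIV. \<Sum>b\<in>UNIV. \<Sum>a\<in>UNIV. S a b c * T a b c)" by (rule sum_swap3)
  also have "\<dots> = frob (unf3 S) (unf3 T)" by (simp add: frob_def unf3_def sum_pair_UNIV)
  finally show ?thesis .
qed

lemma frob_mm_rr: "frob ((A::real^'n^'m) ** (B::real^'p^'n)) C = frob A (C ** transpose B)"
  by (metis frob_mm_r frob_sym)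

lemma tinner_mp1: "tinner (mprod1 G A) T = frob A (unf1 T ** transpose (unf1 G))"
  by (simp add: tinner_unf1 unf1_mp1 frob_mm_rr)
lemma tinner_mp2: "tinner (mprod2 G A) T = frob A (unf2 T ** transpose (unf2 G))"
  by (simp add: tinner_unf2 unf2_mp2 frob_mm_rr)
lemma tinner_mp3: "tinner (mprod3 G A) T = frob A (unf3 T ** transpose (unf3 G))"
  by (simp add: tinner_unf3 unf3_mp3 frob_mm_rr)

lemma tinner_add_l: "tinner (\<lambda>a b c. S a b c + T a b c) R = tinner S R + tinner T R"
  by (simp add: tinner_def distrib_right sum.distrib)
lemma tinner_neg_l: "tinner (\<lambda>a b c. - S a b c) R = - tinner S R"
  by (simp add: tinner_def sum_negf)
lemma tinner_diff_l: "tinner (\<lambda>a b c. S a b c - T a b c) R = tinner S R - tinner T R"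
  by (simp add: tinner_def left_diff_distrib sum_subtractf)
lemma tinner_diff_r: "tinner R (\<lambda>a b c. S a b c - T a b c) = tinner R S - tinner R T"
  by (simp add: tinner_def right_diff_distrib sum_subtractf)
lemma tinner_nonneg: "tinner S S \<ge> 0"
  by (simp add: tinner_unf1 frob_self_nonneg)
lemma tinner_zero: "tinner S S = 0 \<Longrightarrow> S = (\<lambda>a b c. 0)"
proof -
  assume "tinner S S = 0"
  then have "unf1 S = 0" by (simp add: tinner_unf1 frob_self_zero)
  then have "\<forall>a b c. S a b c = 0" by (auto simp: unf1_def vec_eq_iff)
  then show "S = (\<lambda>a b c. 0)" by (auto simp: fun_eq_iff)
qed



definition Emode :: "real^'r::finite^'n::finite \<Rightarrow> real^'k::finite^'n \<Rightarrow> real \<Rightarrow> real^'c::finite^'r \<Rightarrow> real^'r^'n \<Rightarrow> real^'c^'r \<Rightarrow> real^'r^'r" where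
  "Emode U Pm c Gi x xGi = transpose U ** x ** (Gi ** transpose Gi)
      + c *\<^sub>R (transpose (U - Pm ** transpose Pm ** U) ** x) - xGi ** transpose Gi"

definition lhs :: "real^('j::finite \<times> 'k::finite)^'r::finite \<Rightarrow> (real^'r^'n::finite) \<Rightarrow> (real^'kk::finite^'n) \<Rightarrow>
   real \<Rightarrow> real \<Rightarrow> (real^'r^'r) \<Rightarrow> (real^'j^'j) \<Rightarrow> (real^'k^'k) \<Rightarrow> real^'r^'r" where
  "lhs Gi Ui Pm N a Oi Oj Ok =
     skw (transpose (Pm ** transpose Pm ** Ui) ** (Pm ** transpose Pm ** Ui) ** Oi ** (Gi ** transpose Gi))
     + skw ((Gi ** transpose Gi) ** Oi)
     + skw (transpose (Ui - Pm ** transpose Pm ** Ui) ** (Ui - Pm ** transpose Pm ** Ui) ** Oi ** ((N * a) *\<^sub>R mat 1 + Gi ** transpose Gi))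
     - Gi ** (kron (mat 1) Ok + kron Oj (mat 1)) ** transpose Gi"

definition rhs :: "real^('j::finite \<times> 'k::finite)^'r::finite \<Rightarrow> (real^'r^'n::finite) \<Rightarrow> (real^'kk::finite^'n) \<Rightarrow> (real^'r^'n) \<Rightarrow> real^('j \<times> 'k)^'r \<Rightarrow>
   real \<Rightarrow> real \<Rightarrow> real^'r^'r" where
  "rhs Gi Ui Pm ei eGi N a =
     skw (transpose (Pm ** transpose Pm ** Ui) ** ei ** (Gi ** transpose Gi)
        + transpose (Ui - Pm ** transpose Pm ** Ui) ** ei ** ((N * a) *\<^sub>R mat 1 + Gi ** transpose Gi)
        + Gi ** transpose eGi)"

lemma sys_eq_iff: "sys_eq Gi Ui Pm ei eGi N a Oi Oj Ok \<longleftrightarrow> lhs Gi Ui Pm N a Oi Oj Ok = rhs Gi Ui Pm ei eGi N a"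
  by (simp add: sys_eq_def lhs_def rhs_def Let_def)

lemma K_mode:
  "frob (U ** Om) (x ** (Gi ** transpose Gi)) + c * frob (U ** Om) ((mat 1 - Pm ** transpose Pm) ** x)
     - frob Om (xGi ** transpose Gi) = frob Om (Emode U Pm c Gi x xGi)"
  by (simp add: Emode_def frob_mm_l frob_add_r frob_diff_r frob_scale_r mm_simps matrix_mul_assoc)

lemma Emode_diff: "Emode U Pm c Gi (x - y) (xa - ya) = Emode U Pm c Gi x xa - Emode U Pm c Gi y ya"
  by (simp add: Emode_def mm_simps algebra_simps)

lemma assoc_cancel: "transpose P ** P = mat 1 \<Longrightarrow> X ** transpose P ** P = X"
  by (metis matrix_mul_assoc matrix_mul_rid)

lemma kron_I_skew: "skew_mat Om \<Longrightarrow> transpose (kron (mat 1) Om) = - kron (mat 1) Om"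
  by (simp add: tr_kron skew_mat_def kron_neg_r)
lemma kron_skew_I: "skew_mat Om \<Longrightarrow> transpose (kron Om (mat 1)) = - kron Om (mat 1)"
  by (simp add: tr_kron skew_mat_def kron_neg_l)

lemma VW_facts:
  fixes U :: "real^'r::finite^'n::finite" and Pm :: "real^'k::finite^'n"
  assumes hU: "transpose U ** U = mat 1" and hP: "transpose Pm ** Pm = mat 1"
  defines "V \<equiv> Pm ** transpose Pm ** U"
  defines "W \<equiv> U - V"
  shows "transpose V ** V + transpose W ** W = mat 1" and "transpose W ** U = transpose W ** W"
    and "transpose V + transpose W = transpose U"
proof -
  note c1 = assoc_cancel[OF hP] and c2 = assoc_cancel[OF hU]
  show "transpose V ** V + transpose W ** W = mat 1"
    unfolding W_def V_def by (simp add: mm_simps matrix_mul_assoc c1 hU)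
  show "transpose W ** U = transpose W ** W"
    unfolding W_def V_def by (simp add: mm_simps matrix_mul_assoc c1 hU)
  show "transpose V + transpose W = transpose U"
    unfolding W_def V_def by (simp add: tr_diff)
qed



lemma skw_sym0: "skw (X + transpose X) = 0"
  by (simp add: skw_def tr_add algebra_simps)

lemma R_mode:
  "skw (Emode U Pm (N * a) Gi e eGi) = rhs Gi U Pm e eGi N a"
proof -
  let ?X = "eGi ** transpose Gi"
  have "transpose (Pm ** transpose Pm ** U) ** e ** (Gi ** transpose Gi)
        + transpose (U - Pm ** transpose Pm ** U) ** e ** ((N * a) *\<^sub>R mat 1 + Gi ** transpose Gi)
        + Gi ** transpose eGi = Emode U Pm (N * a) Gi e eGi + (?X + transpose ?X)"
    by (simp add: Emode_def mm_simps algebra_simps)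
  moreover have "skw (Emode U Pm (N * a) Gi e eGi + (?X + transpose ?X)) = skw (Emode U Pm (N * a) Gi e eGi)"
    by (simp only: skw_add skw_sym0) (simp add: skw_tr)
  ultimately show ?thesis by (simp only: rhs_def)
qed

lemma skw_GO: "skew_mat Om \<Longrightarrow> skw ((Gi ** transpose Gi) ** Om) = skw (Om ** (Gi ** transpose Gi))"
proof -
  assume s: "skew_mat Om"
  have "transpose (Om ** (Gi ** transpose Gi)) = - ((Gi ** transpose Gi) ** Om)"
    using s by (simp add: skew_mat_def mm_simps matrix_mul_assoc)
  then have "skw (- ((Gi ** transpose Gi) ** Om)) = - skw (Om ** (Gi ** transpose Gi))"
    by (metis skw_tr)
  then show ?thesis by (simp add: skw_neg)
qed

lemma skw_of_skew: "transpose Y = - Y \<Longrightarrow> skw Y = Y"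
  by (simp add: skw_skew skew_mat_def)

lemma L_mode:
  fixes U :: "real^'r::finite^'n::finite" and Pm :: "real^'kk::finite^'n"
    and Gi :: "real^('j::finite \<times> 'k::finite)^'r"
  assumes hU: "transpose U ** U = mat 1" and hP: "transpose Pm ** Pm = mat 1"
    and si: "skew_mat Oi" and sj: "skew_mat Oj" and sk: "skew_mat Ok"
  shows "skw (Emode U Pm (N * a) Gi (U ** Oi)
            (- (Oi ** Gi + Gi ** transpose (kron (mat 1) Ok) + Gi ** transpose (kron Oj (mat 1)))))
         = lhs Gi U Pm N a Oi Oj Ok"
proof -
  define V where "V = Pm ** transpose Pm ** U"
  define W where "W = U - V"
  define GG where "GG = Gi ** transpose Gi"
  define K where "K = kron (mat 1) Ok + kron Oj (mat 1)"
  define c where "c = N * a"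
  have f1: "transpose V ** V + transpose W ** W = mat 1"
   and f2: "transpose W ** U = transpose W ** W"
    using VW_facts[OF hU hP] by (simp_all add: V_def W_def)
  have tK: "transpose K = - K"
    by (simp add: K_def tr_add kron_I_skew[OF sk] kron_skew_I[OF sj])
  have GKG: "transpose (Gi ** K ** transpose Gi) = - (Gi ** K ** transpose Gi)"
    by (simp add: mm_simps tK matrix_mul_assoc)
  have E: "Emode U Pm c Gi (U ** Oi)
            (- (Oi ** Gi + Gi ** transpose (kron (mat 1) Ok) + Gi ** transpose (kron Oj (mat 1))))
        = Oi ** GG + Oi ** GG + c *\<^sub>R (transpose W ** W ** Oi) - Gi ** K ** transpose Gi"
  proof -
    have a1: "transpose U ** (U ** Oi) ** GG = Oi ** GG" by (simp add: matrix_mul_assoc hU)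
    have a2: "transpose W ** (U ** Oi) = transpose W ** W ** Oi" by (simp add: matrix_mul_assoc f2)
    have a3: "transpose (kron (mat 1) Ok) + transpose (kron Oj (mat 1)) = - K"
      using tK by (simp add: K_def tr_add)
    have "- (Oi ** Gi + Gi ** transpose (kron (mat 1) Ok) + Gi ** transpose (kron Oj (mat 1))) ** transpose Gi
        = - (Oi ** GG) + Gi ** K ** transpose Gi"
      by (simp add: GG_def K_def kron_I_skew[OF sk] kron_skew_I[OF sj] mm_simps matrix_mul_assoc)
    then show ?thesis
      unfolding Emode_def using a1 a2
      by (simp add: V_def[symmetric] W_def[symmetric] GG_def[symmetric] algebra_simps)
  qed
  have L: "lhs Gi U Pm N a Oi Oj Ok = skw (transpose V ** V ** Oi ** GG) + skw (GG ** Oi)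
      + skw (transpose W ** W ** Oi ** (c *\<^sub>R mat 1 + GG)) - Gi ** K ** transpose Gi"
    by (simp add: lhs_def V_def W_def GG_def K_def c_def)
  have "skw (transpose V ** V ** Oi ** GG) + skw (transpose W ** W ** Oi ** (c *\<^sub>R mat 1 + GG))
      = skw ((transpose V ** V + transpose W ** W) ** Oi ** GG) + c *\<^sub>R skw (transpose W ** W ** Oi)"
    by (simp add: mm_simps skw_add skw_scale algebra_simps)
  also have "\<dots> = skw (Oi ** GG) + c *\<^sub>R skw (transpose W ** W ** Oi)" by (simp add: f1)
  finally have L2: "skw (transpose V ** V ** Oi ** GG) + skw (transpose W ** W ** Oi ** (c *\<^sub>R mat 1 + GG))
      = skw (Oi ** GG) + c *\<^sub>R skw (transpose W ** W ** Oi)" .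
  have "skw (GG ** Oi) = skw (Oi ** GG)" unfolding GG_def by (rule skw_GO[OF si])
  then have "lhs Gi U Pm N a Oi Oj Ok = skw (Oi ** GG) + skw (Oi ** GG) + c *\<^sub>R skw (transpose W ** W ** Oi)
      - Gi ** K ** transpose Gi"
    using L L2 by (simp add: algebra_simps)
  moreover have "skw (Gi ** K ** transpose Gi) = Gi ** K ** transpose Gi"
    by (rule skw_of_skew[OF GKG])
  moreover note E
  ultimately show ?thesis
    by (simp only: c_def[symmetric] skw_add skw_diff skw_scale)
qed



lemma lhs_add: "lhs Gi U Pm N a (Oi + Oi') (Oj + Oj') (Ok + Ok') = lhs Gi U Pm N a Oi Oj Ok + lhs Gi U Pm N a Oi' Oj' Ok'"
  unfolding lhs_def
  by (simp only: matrix_add_ldistrib mm_add_r skw_add kron_add_l kron_add_r) (simp add: algebra_simps)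
lemma lhs_scale: "lhs Gi U Pm N a (k *\<^sub>R Oi) (k *\<^sub>R Oj) (k *\<^sub>R Ok) = k *\<^sub>R lhs Gi U Pm N a Oi Oj Ok"
  unfolding lhs_def
  by (simp only: matrix_add_ldistrib mm_add_r mm_scale_l mm_scale_r skw_add skw_scale kron_scale_l kron_scale_r
     scaleR_add_right scaleR_diff_right) (simp add: algebra_simps)
lemma lhs_diff: "lhs Gi U Pm N a (Oi - Oi') (Oj - Oj') (Ok - Ok') = lhs Gi U Pm N a Oi Oj Ok - lhs Gi U Pm N a Oi' Oj' Ok'"
  unfolding lhs_def
  by (simp only: matrix_add_ldistrib mm_diff_l mm_diff_r mm_add_r skw_diff skw_add kron_diff_l kron_diff_r) (simp add: algebra_simps)

lemma metric_diff_l: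
  "metric P al X (tdiff u w) xi = metric P al X u xi - metric P al X w xi"
  by (cases P, cases al, cases X, cases u, cases w, cases xi)
     (simp add: metric_def tdiff_def Let_def frob_diff_l tinner_diff_l algebra_simps)

lemma metric_diff_r:
  "metric P al X xi (tdiff u w) = metric P al X xi u - metric P al X xi w"
  by (cases P, cases al, cases X, cases u, cases w, cases xi)
     (simp add: metric_def tdiff_def Let_def frob_diff_r tinner_diff_r mm_diff_l mm_diff_r algebra_simps)

lemma row_mm: "((x::real^'r::finite^'n::finite) ** (Gi::real^'c::finite^'r)) $ n = transpose Gi *v (x $ n)"
  by (simp add: vec_eq_iff matrix_matrix_mult_def matrix_vector_mult_def transpose_def mult.commute)

lemma full_rank_cancel:
  fixes x :: "real^'r::finite^'n::finite" and Gi :: "real^'c::finite^'r"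
  assumes "rank Gi = CARD('r)" and "x ** Gi = 0"
  shows "x = 0"
proof -
  have "inj ((*v) (transpose Gi))"
    using assms(1) by (simp add: full_rank_injective[symmetric] rank_transpose)
  moreover have "\<And>n. transpose Gi *v (x $ n) = transpose Gi *v 0"
    using assms(2) by (metis row_mm matrix_vector_mult_0_right zero_index)
  ultimately have "\<And>n. x $ n = 0" by (metis injD)
  then show ?thesis by (simp add: vec_eq_iff)
qed

lemma frob_GG: "frob x (x ** (Gi ** transpose Gi)) = frob (x ** Gi) (x ** Gi)"
  by (simp add: matrix_mul_assoc frob_mm_r)

lemma frob_Q:
  assumes "transpose Pm ** Pm = mat 1"
  shows "frob x ((mat 1 - Pm ** transpose Pm) ** x) = frob ((mat 1 - Pm ** transpose Pm) ** x) ((mat 1 - Pm ** transpose Pm) ** x)"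
proof -
  have Q: "transpose (mat 1 - Pm ** transpose Pm) ** (mat 1 - Pm ** transpose Pm) = mat 1 - Pm ** transpose Pm"
    by (simp add: mm_simps matrix_mul_assoc assoc_cancel[OF assms])
  show ?thesis by (simp add: frob_mm_l matrix_mul_assoc Q)
qed



lemma K_full:
  fixes G :: "('r1::finite,'r2::finite,'r3::finite) tensor3"
    and U1 :: "(real^'r1^'n1::finite)" and U2 :: "(real^'r2^'n2::finite)" and U3 :: "(real^'r3^'n3::finite)"
    and P1 :: "(real^'k1::finite^'n1)" and P2 :: "(real^'k2::finite^'n2)" and P3 :: "(real^'k3::finite^'n3)"
  defines "N \<equiv> real (CARD('n1) * CARD('n2) * CARD('n3))"
  shows "metric (P1,P2,P3) (a1,a2,a3) (G,U1,U2,U3)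
     ((\<lambda>a b c. - (mprod1 G O1 a b c + mprod2 G O2 a b c + mprod3 G O3 a b c)), U1 ** O1, U2 ** O2, U3 ** O3)
     (xG,x1,x2,x3)
   = frob O1 (Emode U1 P1 (N*a1) (unf1 G) x1 (unf1 xG)) + frob O2 (Emode U2 P2 (N*a2) (unf2 G) x2 (unf2 xG))
     + frob O3 (Emode U3 P3 (N*a3) (unf3 G) x3 (unf3 xG))"
proof -
  have t: "tinner (\<lambda>a b c. - (mprod1 G O1 a b c + mprod2 G O2 a b c + mprod3 G O3 a b c)) xG
     = - (frob O1 (unf1 xG ** transpose (unf1 G)) + frob O2 (unf2 xG ** transpose (unf2 G))
          + frob O3 (unf3 xG ** transpose (unf3 G)))"
    by (simp only: tinner_neg_l tinner_add_l tinner_mp1 tinner_mp2 tinner_mp3)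
  note k1 = K_mode[of U1 O1 x1 "unf1 G" "N*a1" P1 "unf1 xG"]
  note k2 = K_mode[of U2 O2 x2 "unf2 G" "N*a2" P2 "unf2 xG"]
  note k3 = K_mode[of U3 O3 x3 "unf3 G" "N*a3" P3 "unf3 xG"]
  show ?thesis
    unfolding metric_def Let_def N_def[symmetric] using k1 k2 k3 t by simp
qed

lemma P_full:
  fixes G :: "('r1::finite,'r2::finite,'r3::finite) tensor3"
    and U1 :: "(real^'r1^'n1::finite)" and U2 :: "(real^'r2^'n2::finite)" and U3 :: "(real^'r3^'n3::finite)"
    and P1 :: "(real^'k1::finite^'n1)" and P2 :: "(real^'k2::finite^'n2)" and P3 :: "(real^'k3::finite^'n3)"
  assumes X: "in_Mr (G, U1, U2, U3)"
    and h1: "transpose P1 ** P1 = mat 1" and h2: "transpose P2 ** P2 = mat 1" and h3: "transpose P3 ** P3 = mat 1"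
    and a: "a1 > 0" "a2 > 0" "a3 > 0"
    and z: "metric (P1,P2,P3) (a1,a2,a3) (G,U1,U2,U3) (qG,q1,q2,q3) (qG,q1,q2,q3) = 0"
  shows "qG = (\<lambda>a b c. 0) \<and> q1 = 0 \<and> q2 = 0 \<and> q3 = 0"
proof -
  define N where "N = real (CARD('n1) * CARD('n2) * CARD('n3))"
  have Npos: "N > 0" by (simp add: N_def)
  let ?Q1 = "mat 1 - P1 ** transpose P1" and ?Q2 = "mat 1 - P2 ** transpose P2" and ?Q3 = "mat 1 - P3 ** transpose P3"
  have eq: "frob (q1 ** unf1 G) (q1 ** unf1 G) + frob (q2 ** unf2 G) (q2 ** unf2 G) + frob (q3 ** unf3 G) (q3 ** unf3 G)
     + tinner qG qG + N * a1 * frob (?Q1 ** q1) (?Q1 ** q1) + N * a2 * frob (?Q2 ** q2) (?Q2 ** q2)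
     + N * a3 * frob (?Q3 ** q3) (?Q3 ** q3) = 0"
    using z unfolding metric_def Let_def N_def[symmetric]
    by (simp add: frob_GG frob_Q[OF h1] frob_Q[OF h2] frob_Q[OF h3])
  have n1: "N * a1 * frob (?Q1 ** q1) (?Q1 ** q1) \<ge> 0"
    using Npos a by (intro mult_nonneg_nonneg) (auto simp: frob_self_nonneg)
  have n2: "N * a2 * frob (?Q2 ** q2) (?Q2 ** q2) \<ge> 0"
    using Npos a by (intro mult_nonneg_nonneg) (auto simp: frob_self_nonneg)
  have n3: "N * a3 * frob (?Q3 ** q3) (?Q3 ** q3) \<ge> 0"
    using Npos a by (intro mult_nonneg_nonneg) (auto simp: frob_self_nonneg)
  note nn = frob_self_nonneg[of "q1 ** unf1 G"] frob_self_nonneg[of "q2 ** unf2 G"]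
    frob_self_nonneg[of "q3 ** unf3 G"] tinner_nonneg[of qG]
  have z1: "frob (q1 ** unf1 G) (q1 ** unf1 G) = 0" and z2: "frob (q2 ** unf2 G) (q2 ** unf2 G) = 0"
    and z3: "frob (q3 ** unf3 G) (q3 ** unf3 G) = 0" and zG: "tinner qG qG = 0"
    using eq n1 n2 n3 nn by linarith+
  have r: "rank (unf1 G) = CARD('r1)" "rank (unf2 G) = CARD('r2)" "rank (unf3 G) = CARD('r3)"
    using X by (simp_all add: in_Mr_def)
  show ?thesis
    using full_rank_cancel[OF r(1) frob_self_zero[OF z1]] full_rank_cancel[OF r(2) frob_self_zero[OF z2]]
      full_rank_cancel[OF r(3) frob_self_zero[OF z3]] tinner_zero[OF zG] by simp
qed



lemma skw_sym_decomp: "A = skw A + (1/2) *\<^sub>R (A + transpose A)"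
  by (simp add: skw_def algebra_simps scaleR_2[symmetric])

lemma split_skew_sym:
  fixes S Y R :: "real^'n::finite^'n"
  assumes "transpose S = - S" "transpose Y = Y" "transpose R = - R" "S + Y = R"
  shows "Y = 0 \<and> S = R"
proof -
  have "transpose (S + Y) = transpose R" using assms(4) by simp
  then have "- S + Y = - R" using assms(1-3) by (simp add: tr_add)
  then have c2: "- S $ i $ j + Y $ i $ j = - R $ i $ j" for i j by (metis vector_add_component vector_uminus_component)
  have c1: "S $ i $ j + Y $ i $ j = R $ i $ j" for i j using assms(4) by (metis vector_add_component)
  have "Y $ i $ j = 0" for i j using c1[of i j] c2[of i j] by linarith
  then have "Y = 0" by (simp add: vec_eq_iff)
  then show ?thesis using assms(4) by simp
qed

lemma skew_diff: "skew_mat A \<Longrightarrow> skew_mat B \<Longrightarrow> skew_mat (A - B)"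
  by (simp add: skew_mat_def tr_diff)

lemma tang_mode: "transpose (U::real^'r::finite^'n::finite) ** x + transpose x ** U = 0 \<Longrightarrow> transpose U ** y + transpose y ** U = 0
   \<Longrightarrow> transpose U ** (x - y) + transpose (x - y) ** U = 0"
proof -
  assume a: "transpose U ** x + transpose x ** U = 0" and b: "transpose U ** y + transpose y ** U = 0"
  have "transpose U ** (x - y) + transpose (x - y) ** U = (transpose U ** x + transpose x ** U) - (transpose U ** y + transpose y ** U)"
    by (simp add: mm_diff_l mm_diff_r tr_diff algebra_simps)
  then show ?thesis using a b by simp
qed

lemma tangent_diff:
  "x \<in> tangent_space X \<Longrightarrow> y \<in> tangent_space X \<Longrightarrow> tdiff x y \<in> tangent_space X"
  by (cases X, cases x, cases y)
     (simp add: tangent_space_def tdiff_def tang_mode)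

lemma H_diff:
  "x \<in> horizontal_space P al X \<Longrightarrow> y \<in> horizontal_space P al X \<Longrightarrow> tdiff x y \<in> horizontal_space P al X"
  by (simp add: horizontal_space_def tangent_diff metric_diff_r)

lemma tdiff_tdiff: "tdiff (tdiff e q) (tdiff e p) = tdiff p q"
  by (cases e, cases p, cases q) (simp add: tdiff_def fun_eq_iff)



lemma tang_p0: "transpose (U::real^'r::finite^'n::finite) ** U = mat 1 \<Longrightarrow> skew_mat Om \<Longrightarrow>
  transpose U ** e + transpose e ** U = 0 \<Longrightarrow> transpose U ** (e - U ** Om) + transpose (e - U ** Om) ** U = 0"
proof -
  assume hU: "transpose U ** U = mat 1" and s: "skew_mat Om" and t: "transpose U ** e + transpose e ** U = 0"
  have "transpose U ** (e - U ** Om) + transpose (e - U ** Om) ** U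
      = (transpose U ** e + transpose e ** U) - (Om + transpose Om)"
    by (simp add: mm_simps matrix_mul_assoc hU assoc_cancel[OF hU] algebra_simps)
  then show ?thesis using t s by (simp add: skew_mat_def)
qed

theorem proposition7:
  fixes G :: "('r1::finite,'r2::finite,'r3::finite) tensor3"
    and U1 :: "(real^'r1^'n1::finite)" and U2 :: "(real^'r2^'n2::finite)" and U3 :: "(real^'r3^'n3::finite)"
    and P1 :: "(real^'k1::finite^'n1)" and P2 :: "(real^'k2::finite^'n2)" and P3 :: "(real^'k3::finite^'n3)"
    and a1 a2 a3 :: real
    and eG :: "('r1,'r2,'r3) tensor3"
    and e1 :: "(real^'r1^'n1)" and e2 :: "(real^'r2^'n2)" and e3 :: "(real^'r3^'n3)"
  assumes "CARD('r1) \<le> CARD('n1)" and "CARD('r2) \<le> CARD('n2)" and "CARD('r3) \<le> CARD('n3)"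
    and "CARD('r1) \<le> CARD('k1)" and "CARD('r2) \<le> CARD('k2)" and "CARD('r3) \<le> CARD('k3)"
    and "a1 > 0" and "a2 > 0" and "a3 > 0"
    and "transpose P1 ** P1 = mat 1" and "transpose P2 ** P2 = mat 1" and "transpose P3 ** P3 = mat 1"
    and "in_Mr (G, U1, U2, U3)"
    and "(eG, e1, e2, e3) \<in> tangent_space (G, U1, U2, U3)"
  shows "(\<exists>!(O1, O2, O3).
            lin_system (P1, P2, P3) (a1, a2, a3) (G, U1, U2, U3) (eG, e1, e2, e3) O1 O2 O3)
       \<and> (\<forall>O1 O2 O3.
            lin_system (P1, P2, P3) (a1, a2, a3) (G, U1, U2, U3) (eG, e1, e2, e3) O1 O2 O3 \<longrightarrow>
            horizontal_proj (P1, P2, P3) (a1, a2, a3) (G, U1, U2, U3) (eG, e1, e2, e3) =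
              ((\<lambda>a b c. eG a b c + (mprod1 G O1 a b c + mprod2 G O2 a b c + mprod3 G O3 a b c)),
               e1 - U1 ** O1, e2 - U2 ** O2, e3 - U3 ** O3))"
proof -
  define N where "N = real (CARD('n1) * CARD('n2) * CARD('n3))"
  have hU1: "transpose U1 ** U1 = mat 1" and hU2: "transpose U2 ** U2 = mat 1" and hU3: "transpose U3 ** U3 = mat 1"
    using assms(13) by (simp_all add: in_Mr_def)
  note hP1 = assms(10) and hP2 = assms(11) and hP3 = assms(12)
  have tg1: "transpose U1 ** e1 + transpose e1 ** U1 = 0" and tg2: "transpose U2 ** e2 + transpose e2 ** U2 = 0"
    and tg3: "transpose U3 ** e3 + transpose e3 ** U3 = 0"
    using assms(14) by (simp_all add: tangent_space_def)
  define vG :: "real^'r1^'r1 \<Rightarrow> real^'r2^'r2 \<Rightarrow> real^'r3^'r3 \<Rightarrow> ('r1,'r2,'r3) tensor3"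
    where "vG O1 O2 O3 = (\<lambda>a b c. - (mprod1 G O1 a b c + mprod2 G O2 a b c + mprod3 G O3 a b c))" for O1 O2 O3
  define L1 where "L1 O1 O2 O3 = lhs (unf1 G) U1 P1 N a1 O1 O3 O2" for O1 O2 O3
  define L2 where "L2 O1 O2 O3 = lhs (unf2 G) U2 P2 N a2 O2 O3 O1" for O1 O2 O3
  define L3 where "L3 O1 O2 O3 = lhs (unf3 G) U3 P3 N a3 O3 O2 O1" for O1 O2 O3
  define R1 where "R1 = rhs (unf1 G) U1 P1 e1 (unf1 eG) N a1"
  define R2 where "R2 = rhs (unf2 G) U2 P2 e2 (unf2 eG) N a2"
  define R3 where "R3 = rhs (unf3 G) U3 P3 e3 (unf3 eG) N a3"
  let ?lin = "lin_system (P1, P2, P3) (a1, a2, a3) (G, U1, U2, U3) (eG, e1, e2, e3)"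
  have char: "?lin O1 O2 O3 \<longleftrightarrow> skew_mat O1 \<and> skew_mat O2 \<and> skew_mat O3 \<and>
      L1 O1 O2 O3 = R1 \<and> L2 O1 O2 O3 = R2 \<and> L3 O1 O2 O3 = R3" for O1 O2 O3
    by (simp only: lin_system_def sys_eq_iff Let_def N_def L1_def L2_def L3_def R1_def R2_def R3_def prod.case)
  have uv1: "unf1 (vG O1 O2 O3) = - (O1 ** unf1 G + unf1 G ** transpose (kron (mat 1) O2) + unf1 G ** transpose (kron O3 (mat 1)))" for O1 O2 O3
    by (simp only: vG_def unf1_neg unf1_add unf1_mp1 unf1_mp2 unf1_mp3)
  have uv2: "unf2 (vG O1 O2 O3) = - (O2 ** unf2 G + unf2 G ** transpose (kron (mat 1) O1) + unf2 G ** transpose (kron O3 (mat 1)))" for O1 O2 O3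
    by (simp only: vG_def unf2_neg unf2_add unf2_mp1 unf2_mp2 unf2_mp3) (simp add: algebra_simps)
  have uv3: "unf3 (vG O1 O2 O3) = - (O3 ** unf3 G + unf3 G ** transpose (kron (mat 1) O1) + unf3 G ** transpose (kron O2 (mat 1)))" for O1 O2 O3
    by (simp only: vG_def unf3_neg unf3_add unf3_mp1 unf3_mp2 unf3_mp3) (simp add: algebra_simps)
  have Lid1: "skw (Emode U1 P1 (N*a1) (unf1 G) (U1 ** O1) (unf1 (vG O1 O2 O3))) = L1 O1 O2 O3"
    if "skew_mat O1" "skew_mat O2" "skew_mat O3" for O1 O2 O3
    unfolding uv1 L1_def by (rule L_mode[OF hU1 hP1 that(1) that(3) that(2)])
  have Lid2: "skw (Emode U2 P2 (N*a2) (unf2 G) (U2 ** O2) (unf2 (vG O1 O2 O3))) = L2 O1 O2 O3"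
    if "skew_mat O1" "skew_mat O2" "skew_mat O3" for O1 O2 O3
    unfolding uv2 L2_def by (rule L_mode[OF hU2 hP2 that(2) that(3) that(1)])
  have Lid3: "skw (Emode U3 P3 (N*a3) (unf3 G) (U3 ** O3) (unf3 (vG O1 O2 O3))) = L3 O1 O2 O3"
    if "skew_mat O1" "skew_mat O2" "skew_mat O3" for O1 O2 O3
    unfolding uv3 L3_def by (rule L_mode[OF hU3 hP3 that(3) that(2) that(1)])
  have Kf: "metric (P1,P2,P3) (a1,a2,a3) (G,U1,U2,U3) (vG O1 O2 O3, U1 ** O1, U2 ** O2, U3 ** O3) (xG,x1,x2,x3)
     = frob O1 (Emode U1 P1 (N*a1) (unf1 G) x1 (unf1 xG)) + frob O2 (Emode U2 P2 (N*a2) (unf2 G) x2 (unf2 xG))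
     + frob O3 (Emode U3 P3 (N*a3) (unf3 G) x3 (unf3 xG))" for O1 O2 O3 xG x1 x2 x3
    unfolding vG_def N_def by (rule K_full)
  have kernel: "O1 = 0 \<and> O2 = 0 \<and> O3 = 0"
    if s: "skew_mat O1" "skew_mat O2" "skew_mat O3" and z: "L1 O1 O2 O3 = 0" "L2 O1 O2 O3 = 0" "L3 O1 O2 O3 = 0"
    for O1 O2 O3
  proof -
    let ?E1 = "Emode U1 P1 (N*a1) (unf1 G) (U1 ** O1) (unf1 (vG O1 O2 O3))"
    let ?E2 = "Emode U2 P2 (N*a2) (unf2 G) (U2 ** O2) (unf2 (vG O1 O2 O3))"
    let ?E3 = "Emode U3 P3 (N*a3) (unf3 G) (U3 ** O3) (unf3 (vG O1 O2 O3))"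
    have "metric (P1,P2,P3) (a1,a2,a3) (G,U1,U2,U3) (vG O1 O2 O3, U1 ** O1, U2 ** O2, U3 ** O3)
            (vG O1 O2 O3, U1 ** O1, U2 ** O2, U3 ** O3)
       = frob O1 ?E1 + frob O2 ?E2 + frob O3 ?E3" by (rule Kf)
    also have "\<dots> = frob O1 (skw ?E1) + frob O2 (skw ?E2) + frob O3 (skw ?E3)"
      by (simp only: frob_skew[OF s(1), of ?E1] frob_skew[OF s(2), of ?E2] frob_skew[OF s(3), of ?E3])
    also have "\<dots> = 0" using z by (simp add: Lid1[OF s] Lid2[OF s] Lid3[OF s])
    finally have "vG O1 O2 O3 = (\<lambda>a b c. 0) \<and> U1 ** O1 = 0 \<and> U2 ** O2 = 0 \<and> U3 ** O3 = 0"
      by (rule P_full[OF assms(13) hP1 hP2 hP3 assms(7-9)])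
    then have "transpose U1 ** (U1 ** O1) = 0" "transpose U2 ** (U2 ** O2) = 0" "transpose U3 ** (U3 ** O3) = 0"
      by simp_all
    then show ?thesis by (simp_all add: matrix_mul_assoc hU1 hU2 hU3)
  qed
  have uniq: "O1 = O1' \<and> O2 = O2' \<and> O3 = O3'"
    if "?lin O1 O2 O3" "?lin O1' O2' O3'" for O1 O2 O3 O1' O2' O3'
  proof -
    have a: "skew_mat O1" "skew_mat O2" "skew_mat O3" "L1 O1 O2 O3 = R1" "L2 O1 O2 O3 = R2" "L3 O1 O2 O3 = R3"
      using that(1) char by blast+
    have b: "skew_mat O1'" "skew_mat O2'" "skew_mat O3'" "L1 O1' O2' O3' = R1" "L2 O1' O2' O3' = R2" "L3 O1' O2' O3' = R3"
      using that(2) char by blast+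
    have "O1 - O1' = 0 \<and> O2 - O2' = 0 \<and> O3 - O3' = 0"
    proof (rule kernel)
      show "skew_mat (O1 - O1')" "skew_mat (O2 - O2')" "skew_mat (O3 - O3')"
        using a b by (simp_all add: skew_diff)
      have "L1 (O1 - O1') (O2 - O2') (O3 - O3') = L1 O1 O2 O3 - L1 O1' O2' O3'"
        by (simp only: L1_def lhs_diff)
      then show "L1 (O1 - O1') (O2 - O2') (O3 - O3') = 0" using a b by simp
      have "L2 (O1 - O1') (O2 - O2') (O3 - O3') = L2 O1 O2 O3 - L2 O1' O2' O3'"
        by (simp only: L2_def lhs_diff)
      then show "L2 (O1 - O1') (O2 - O2') (O3 - O3') = 0" using a b by simp
      have "L3 (O1 - O1') (O2 - O2') (O3 - O3') = L3 O1 O2 O3 - L3 O1' O2' O3'"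
        by (simp only: L3_def lhs_diff)
      then show "L3 (O1 - O1') (O2 - O2') (O3 - O3') = 0" using a b by simp
    qed
    then show ?thesis by simp
  qed
  have Lskew1: "transpose (L1 O1 O2 O3) = - L1 O1 O2 O3" if "skew_mat O1" "skew_mat O2" "skew_mat O3" for O1 O2 O3
    using Lid1[OF that] by (metis tr_skw)
  have Lskew2: "transpose (L2 O1 O2 O3) = - L2 O1 O2 O3" if "skew_mat O1" "skew_mat O2" "skew_mat O3" for O1 O2 O3
    using Lid2[OF that] by (metis tr_skw)
  have Lskew3: "transpose (L3 O1 O2 O3) = - L3 O1 O2 O3" if "skew_mat O1" "skew_mat O2" "skew_mat O3" for O1 O2 O3
    using Lid3[OF that] by (metis tr_skw)
  have symT: "transpose ((1/2) *\<^sub>R (A + transpose A)) = (1/2) *\<^sub>R (A + transpose A)" for A :: "real^'n^'n"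
    by (simp add: transpose_scalar tr_add add.commute)
  define M :: "(real^'r1^'r1) \<times> (real^'r2^'r2) \<times> (real^'r3^'r3) \<Rightarrow> (real^'r1^'r1) \<times> (real^'r2^'r2) \<times> (real^'r3^'r3)"
    where "M A = (L1 (skw (fst A)) (skw (fst (snd A))) (skw (snd (snd A))) + (1/2) *\<^sub>R (fst A + transpose (fst A)),
                  L2 (skw (fst A)) (skw (fst (snd A))) (skw (snd (snd A))) + (1/2) *\<^sub>R (fst (snd A) + transpose (fst (snd A))),
                  L3 (skw (fst A)) (skw (fst (snd A))) (skw (snd (snd A))) + (1/2) *\<^sub>R (snd (snd A) + transpose (snd (snd A))))" for A
  have Ladd: "L1 (x1 + y1) (x2 + y2) (x3 + y3) = L1 x1 x2 x3 + L1 y1 y2 y3"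
      "L2 (x1 + y1) (x2 + y2) (x3 + y3) = L2 x1 x2 x3 + L2 y1 y2 y3"
      "L3 (x1 + y1) (x2 + y2) (x3 + y3) = L3 x1 x2 x3 + L3 y1 y2 y3" for x1 x2 x3 y1 y2 y3
    by (simp_all only: L1_def L2_def L3_def lhs_add)
  have Lsc: "L1 (k *\<^sub>R x1) (k *\<^sub>R x2) (k *\<^sub>R x3) = k *\<^sub>R L1 x1 x2 x3"
      "L2 (k *\<^sub>R x1) (k *\<^sub>R x2) (k *\<^sub>R x3) = k *\<^sub>R L2 x1 x2 x3"
      "L3 (k *\<^sub>R x1) (k *\<^sub>R x2) (k *\<^sub>R x3) = k *\<^sub>R L3 x1 x2 x3" for x1 x2 x3 k
    by (simp_all only: L1_def L2_def L3_def lhs_scale)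
  have linM: "linear M"
  proof (rule linearI)
    fix A B :: "(real^'r1^'r1) \<times> (real^'r2^'r2) \<times> (real^'r3^'r3)"
    show "M (A + B) = M A + M B"
      by (simp add: M_def skw_add Ladd tr_add algebra_simps)
  next
    fix k :: real and A :: "(real^'r1^'r1) \<times> (real^'r2^'r2) \<times> (real^'r3^'r3)"
    show "M (k *\<^sub>R A) = k *\<^sub>R M A"
      by (simp add: M_def skw_scale Lsc transpose_scalar algebra_simps)
  qed
  have splitM: "skw A1 = A1 \<and> skw A2 = A2 \<and> skw A3 = A3 \<and> L1 (skw A1) (skw A2) (skw A3) = R1'
      \<and> L2 (skw A1) (skw A2) (skw A3) = R2' \<and> L3 (skw A1) (skw A2) (skw A3) = R3'"
    if "M (A1, A2, A3) = (R1', R2', R3')" "transpose R1' = - R1'" "transpose R2' = - R2'" "transpose R3' = - R3'"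
    for A1 A2 A3 R1' R2' R3'
  proof -
    have s: "skew_mat (skw A1)" "skew_mat (skw A2)" "skew_mat (skw A3)" by (simp_all add: skew_skw)
    have e: "L1 (skw A1) (skw A2) (skw A3) + (1/2) *\<^sub>R (A1 + transpose A1) = R1'"
        "L2 (skw A1) (skw A2) (skw A3) + (1/2) *\<^sub>R (A2 + transpose A2) = R2'"
        "L3 (skw A1) (skw A2) (skw A3) + (1/2) *\<^sub>R (A3 + transpose A3) = R3'"
      using that(1) by (simp_all add: M_def)
    note q1 = split_skew_sym[OF Lskew1[OF s] symT that(2) e(1)]
    note q2 = split_skew_sym[OF Lskew2[OF s] symT that(3) e(2)]
    note q3 = split_skew_sym[OF Lskew3[OF s] symT that(4) e(3)]
    have "skw A1 = A1" using skw_sym_decomp[of A1] q1 by simp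
    moreover have "skw A2 = A2" using skw_sym_decomp[of A2] q2 by simp
    moreover have "skw A3 = A3" using skw_sym_decomp[of A3] q3 by simp
    ultimately show ?thesis using q1 q2 q3 by simp
  qed
  have injM: "inj M"
    unfolding linear_injective_0[OF linM]
  proof (intro allI impI)
    fix A assume z: "M A = 0"
    obtain A1 A2 A3 where A: "A = (A1, A2, A3)" by (cases A) auto
    have "M (A1, A2, A3) = (0, 0, 0)" using z A by (simp add: zero_prod_def)
    moreover have t: "transpose (0::real^'r1^'r1) = - 0" "transpose (0::real^'r2^'r2) = - 0"
      "transpose (0::real^'r3^'r3) = - 0" by (simp_all add: tr_zero)
    ultimately have sp: "skw A1 = A1 \<and> skw A2 = A2 \<and> skw A3 = A3 \<and> L1 (skw A1) (skw A2) (skw A3) = 0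
      \<and> L2 (skw A1) (skw A2) (skw A3) = 0 \<and> L3 (skw A1) (skw A2) (skw A3) = 0"
      by (rule splitM)
    then have h: "skw A1 = A1" "skw A2 = A2" "skw A3 = A3"
      "L1 (skw A1) (skw A2) (skw A3) = 0" "L2 (skw A1) (skw A2) (skw A3) = 0" "L3 (skw A1) (skw A2) (skw A3) = 0"
      by blast+
    have "skw A1 = 0 \<and> skw A2 = 0 \<and> skw A3 = 0"
      by (rule kernel) (simp_all only: skew_skw h(4-6))
    then show "A = 0" using h A by (simp add: zero_prod_def)
  qed
  have surjM: "surj M" by (rule linear_injective_imp_surjective[OF linM injM]) simp
  have Rsk: "transpose R1 = - R1" "transpose R2 = - R2" "transpose R3 = - R3"
    by (simp_all add: R1_def R2_def R3_def rhs_def tr_skw)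
  obtain A where "M A = (R1, R2, R3)" using surjM by (metis surjD)
  then obtain A1 A2 A3 where "M (A1, A2, A3) = (R1, R2, R3)" by (cases A) auto
  from splitM[OF this Rsk] have ex: "?lin (skw A1) (skw A2) (skw A3)"
    unfolding char using skew_skw[of A1] skew_skw[of A2] skew_skw[of A3] by blast
  have proj: "horizontal_proj (P1,P2,P3) (a1,a2,a3) (G,U1,U2,U3) (eG,e1,e2,e3) =
      ((\<lambda>a b c. eG a b c + (mprod1 G O1 a b c + mprod2 G O2 a b c + mprod3 G O3 a b c)),
               e1 - U1 ** O1, e2 - U2 ** O2, e3 - U3 ** O3)" if lin: "?lin O1 O2 O3" for O1 O2 O3
  proof -
    have s: "skew_mat O1" "skew_mat O2" "skew_mat O3" and eq: "L1 O1 O2 O3 = R1" "L2 O1 O2 O3 = R2" "L3 O1 O2 O3 = R3"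
      using lin char by blast+
    define p0G where "p0G = (\<lambda>a b c. eG a b c + (mprod1 G O1 a b c + mprod2 G O2 a b c + mprod3 G O3 a b c))"
    define p0 where "p0 = (p0G, e1 - U1 ** O1, e2 - U2 ** O2, e3 - U3 ** O3)"
    let ?H = "horizontal_space (P1,P2,P3) (a1,a2,a3) (G,U1,U2,U3)"
    let ?met = "metric (P1,P2,P3) (a1,a2,a3) (G,U1,U2,U3)"
    let ?eta = "(eG,e1,e2,e3)"
    have td: "tdiff ?eta p0 = (vG O1 O2 O3, U1 ** O1, U2 ** O2, U3 ** O3)"
      by (simp add: p0_def p0G_def tdiff_def vG_def fun_eq_iff)
    have vV: "(vG O1 O2 O3, U1 ** O1, U2 ** O2, U3 ** O3) \<in> vertical_space (G,U1,U2,U3)"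
      unfolding vertical_space_def vG_def using s by blast
    have p0T: "p0 \<in> tangent_space (G,U1,U2,U3)"
      using tang_p0[OF hU1 s(1) tg1] tang_p0[OF hU2 s(2) tg2] tang_p0[OF hU3 s(3) tg3]
      by (simp add: p0_def tangent_space_def)
    have up1: "unf1 p0G = unf1 eG - unf1 (vG O1 O2 O3)"
      by (simp only: p0G_def vG_def unf1_add unf1_neg) simp
    have up2: "unf2 p0G = unf2 eG - unf2 (vG O1 O2 O3)"
      by (simp only: p0G_def vG_def unf2_add unf2_neg) simp
    have up3: "unf3 p0G = unf3 eG - unf3 (vG O1 O2 O3)"
      by (simp only: p0G_def vG_def unf3_add unf3_neg) simp
    have E1: "skw (Emode U1 P1 (N*a1) (unf1 G) (e1 - U1 ** O1) (unf1 p0G)) = 0"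
      by (simp only: up1 Emode_diff skw_diff R_mode[where U=U1 and e=e1] Lid1[OF s] R1_def[symmetric] eq) simp
    have E2: "skw (Emode U2 P2 (N*a2) (unf2 G) (e2 - U2 ** O2) (unf2 p0G)) = 0"
      by (simp only: up2 Emode_diff skw_diff R_mode[where U=U2 and e=e2] Lid2[OF s] R2_def[symmetric] eq) simp
    have E3: "skw (Emode U3 P3 (N*a3) (unf3 G) (e3 - U3 ** O3) (unf3 p0G)) = 0"
      by (simp only: up3 Emode_diff skw_diff R_mode[where U=U3 and e=e3] Lid3[OF s] R3_def[symmetric] eq) simp
    have orth: "?met v p0 = 0" if vin: "v \<in> vertical_space (G,U1,U2,U3)" for v
    proof -
      obtain Q1 Q2 Q3 where v: "v = (vG Q1 Q2 Q3, U1 ** Q1, U2 ** Q2, U3 ** Q3)"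
        and sq: "skew_mat Q1" "skew_mat Q2" "skew_mat Q3"
        using vin unfolding vertical_space_def vG_def by blast
      let ?F1 = "Emode U1 P1 (N*a1) (unf1 G) (e1 - U1 ** O1) (unf1 p0G)"
      let ?F2 = "Emode U2 P2 (N*a2) (unf2 G) (e2 - U2 ** O2) (unf2 p0G)"
      let ?F3 = "Emode U3 P3 (N*a3) (unf3 G) (e3 - U3 ** O3) (unf3 p0G)"
      have "?met v p0 = frob Q1 ?F1 + frob Q2 ?F2 + frob Q3 ?F3"
        unfolding v p0_def by (rule Kf)
      also have "\<dots> = frob Q1 (skw ?F1) + frob Q2 (skw ?F2) + frob Q3 (skw ?F3)"
        by (simp only: frob_skew[OF sq(1), of ?F1] frob_skew[OF sq(2), of ?F2] frob_skew[OF sq(3), of ?F3])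
      also have "\<dots> = 0" by (simp only: E1 E2 E3) simp
      finally show ?thesis .
    qed
    have p0H: "p0 \<in> ?H" using p0T orth by (simp add: horizontal_space_def)
    have "horizontal_proj (P1,P2,P3) (a1,a2,a3) (G,U1,U2,U3) ?eta = p0"
      unfolding horizontal_proj_def
    proof (rule the_equality)
      show "p0 \<in> ?H \<and> (\<forall>xi\<in>?H. ?met (tdiff ?eta p0) xi = 0)"
        using p0H td vV by (simp add: horizontal_space_def)
    next
      fix p assume hp: "p \<in> ?H \<and> (\<forall>xi\<in>?H. ?met (tdiff ?eta p) xi = 0)"
      have qH: "tdiff p p0 \<in> ?H" using H_diff hp p0H by blast
      have o1: "?met (tdiff ?eta p0) (tdiff p p0) = 0"
        using qH td vV by (simp add: horizontal_space_def)
      have o2: "?met (tdiff ?eta p) (tdiff p p0) = 0" using hp qH by blast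
      have "?met (tdiff p p0) (tdiff p p0) = ?met (tdiff (tdiff ?eta p0) (tdiff ?eta p)) (tdiff p p0)"
        by (simp only: tdiff_tdiff)
      also have "\<dots> = ?met (tdiff ?eta p0) (tdiff p p0) - ?met (tdiff ?eta p) (tdiff p p0)"
        by (rule metric_diff_l)
      also have "\<dots> = 0" using o1 o2 by simp
      finally have z: "?met (tdiff p p0) (tdiff p p0) = 0" .
      obtain pG p1 p2 p3 where pp: "p = (pG, p1, p2, p3)" by (cases p) auto
      have tq: "tdiff p p0 = ((\<lambda>a b c. pG a b c - p0G a b c), p1 - (e1 - U1 ** O1), p2 - (e2 - U2 ** O2), p3 - (e3 - U3 ** O3))"
        by (simp add: pp p0_def tdiff_def)
      have "(\<lambda>a b c. pG a b c - p0G a b c) = (\<lambda>a b c. 0) \<and> p1 - (e1 - U1 ** O1) = 0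
           \<and> p2 - (e2 - U2 ** O2) = 0 \<and> p3 - (e3 - U3 ** O3) = 0"
        by (rule P_full[OF assms(13) hP1 hP2 hP3 assms(7-9)]) (use z tq in simp)
      then show "p = p0" by (simp add: pp p0_def fun_eq_iff)
    qed
    then show ?thesis by (simp add: p0_def p0G_def)
  qed
  show ?thesis
  proof
    show "\<exists>!(O1, O2, O3). ?lin O1 O2 O3"
    proof (rule ex1I[of _ "(skw A1, skw A2, skw A3)"])
      show "case (skw A1, skw A2, skw A3) of (O1, O2, O3) \<Rightarrow> ?lin O1 O2 O3" using ex by simp
    next
      fix y assume "case y of (O1, O2, O3) \<Rightarrow> ?lin O1 O2 O3"
      then show "y = (skw A1, skw A2, skw A3)"
        using uniq[OF _ ex] by (cases y) auto
    qed
  next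
    show "\<forall>O1 O2 O3. ?lin O1 O2 O3 \<longrightarrow> horizontal_proj (P1, P2, P3) (a1, a2, a3) (G, U1, U2, U3) (eG, e1, e2, e3) =
              ((\<lambda>a b c. eG a b c + (mprod1 G O1 a b c + mprod2 G O2 a b c + mprod3 G O3 a b c)),
               e1 - U1 ** O1, e2 - U2 ** O2, e3 - U3 ** O3)"
      using proj by blast
  qed
qed


end
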